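(* Let $A,B$ be real $n{\times}n$ matrices. Extend the reals by two new elements $1^*$ and $0^*$ with the arithmetic described in the context, let $C$ be the $n{\times}n$ matrix with $1^*$ on the diagonal and $0^*$ everywhere else, and let $T'$ be the $3n{\times}3n$ block matrix $$T'=\begin{pmatrix} I & A^T & -B\\ A & C & 0\\ -B^T & 0 & C\end{pmatrix}.$$ Compute a lower triangular $3n{\times}3n$ matrix $L$ from $T'$ by the formulas $L(i,i)=\sqrt{T'(i,i)-\sum_{k=1}^{i-1}L(i,k)^2}$ and $L(i,j)=\frac{1}{L(j,j)}\big(T'(i,j)-\sum_{k=1}^{j-1}L(i,k)L(j,k)\big)$ for $i>j$ (with $L(i,j)=0$ for $i<j$), using the extended arithmetic, with the summands of each sum combined in any order, and with the entries computed in any order such that each $L(i,i)$ is computed after all of $L(i,k)$, $k<i$, and each $L(i,j)$, $i>j$, is computed after all of $L(i,k)$, $k<j$, and $L(j,k)$, $k\le j$. Then the block $L_{32}$ of $L$ (rows $2n+1,\dots,3n$, columns $n+1,\dots,2n$) equals $(A\cdot B)^T$, where $A\cdot B$ is the ordinary real matrix product.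
   Context: Extended arithmetic on $\mathbb{R}\cup\{0^*,1^*\}$ (here $x,y$ denote real numbers, and $-0^*=0^*$, $-1^*=1^*$). Addition/subtraction: $1^*\pm z=z\pm 1^*=1^*$ for every $z$; $0^*\pm 0^*=0^*$, $0^*\pm y=y\pm 0^*=0^*$; $x\pm y$ is the usual real value. Multiplication: $1^*\cdot 1^*=1^*$, $1^*\cdot 0^*=0^*\cdot 1^*=0^*$, $1^*\cdot y=y\cdot 1^*=y$, $0^*\cdot 0^*=0$, $0^*\cdot y=y\cdot 0^*=0$, and $x\cdot y$ is the usual real product. Division: division by $0^*$ is undefined; $1^*/1^*=1^*$, $0^*/1^*=0^*$, $x/1^*=x$; for real $y\neq 0$: $1^*/y=1/y$, $0^*/y=0$, $x/y$ usual. Square root: $\sqrt{1^*}=1^*$, $\sqrt{0^*}=0^*$, $\sqrt{x}$ usual for $x\ge 0$. This arithmetic is commutative and associative for both addition and multiplication (but not distributive), so the value of each sum does not depend on the order of summation. *)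

theory Defs
  imports Complex_Main
begin

text \<open>Extended reals: R x is a real number, Zs is 0*, Os is 1*.
  Undef records the result of an undefined operation (division by 0*,
  division by real 0, square root of a negative real); it is absorbing.\<close>

datatype ext = R real | Zs | Os | Undef

fun ext_add :: "ext \<Rightarrow> ext \<Rightarrow> ext" where
  "ext_add Undef _ = Undef"
| "ext_add _ Undef = Undef"
| "ext_add Os _ = Os"
| "ext_add _ Os = Os"
| "ext_add Zs _ = Zs"
| "ext_add _ Zs = Zs"
| "ext_add (R x) (R y) = R (x + y)"

fun ext_neg :: "ext \<Rightarrow> ext" where
  "ext_neg (R x) = R (- x)"
| "ext_neg Zs = Zs"
| "ext_neg Os = Os"
| "ext_neg Undef = Undef"

definition ext_sub :: "ext \<Rightarrow> ext \<Rightarrow> ext" where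
  "ext_sub a b = ext_add a (ext_neg b)"

fun ext_mul :: "ext \<Rightarrow> ext \<Rightarrow> ext" where
  "ext_mul Undef _ = Undef"
| "ext_mul _ Undef = Undef"
| "ext_mul Os Os = Os"
| "ext_mul Os Zs = Zs"
| "ext_mul Zs Os = Zs"
| "ext_mul Os (R y) = R y"
| "ext_mul (R y) Os = R y"
| "ext_mul Zs Zs = R 0"
| "ext_mul Zs (R y) = R 0"
| "ext_mul (R y) Zs = R 0"
| "ext_mul (R x) (R y) = R (x * y)"

fun ext_div :: "ext \<Rightarrow> ext \<Rightarrow> ext" where
  "ext_div Undef _ = Undef"
| "ext_div _ Undef = Undef"
| "ext_div _ Zs = Undef"
| "ext_div Os Os = Os"
| "ext_div Zs Os = Zs"
| "ext_div (R x) Os = R x"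
| "ext_div Os (R y) = (if y \<noteq> 0 then R (1 / y) else Undef)"
| "ext_div Zs (R y) = (if y \<noteq> 0 then R 0 else Undef)"
| "ext_div (R x) (R y) = (if y \<noteq> 0 then R (x / y) else Undef)"

fun ext_sqrt :: "ext \<Rightarrow> ext" where
  "ext_sqrt Os = Os"
| "ext_sqrt Zs = Zs"
| "ext_sqrt (R x) = (if 0 \<le> x then R (sqrt x) else Undef)"
| "ext_sqrt Undef = Undef"

text \<open>Addition is commutative and associative with neutral element the real 0,
  so finite sums (order-independent) are available via sum.\<close>

instantiation ext :: comm_monoid_add
begin
definition zero_ext_def: "0 = R 0"
definition plus_ext_def: "a + b = ext_add a b"
instance
proof
  fix a b c :: ext
  show "a + b + c = a + (b + c)"
    unfolding plus_ext_def by (cases a; cases b; cases c) auto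
  show "a + b = b + a"
    unfolding plus_ext_def by (cases a; cases b) auto
  show "0 + a = a"
    unfolding plus_ext_def zero_ext_def by (cases a) auto
qed
end

text \<open>Cholesky-type recursion (0-based indices), computed in the extended arithmetic.\<close>

function chol :: "(nat \<Rightarrow> nat \<Rightarrow> ext) \<Rightarrow> nat \<Rightarrow> nat \<Rightarrow> ext" where
  "chol T i j =
     (if i = j then ext_sqrt (ext_sub (T i i) (\<Sum>k\<in>{..<i}. ext_mul (chol T i k) (chol T i k)))
      else if j < i then
        ext_div (ext_sub (T i j) (\<Sum>k\<in>{..<j}. ext_mul (chol T i k) (chol T j k))) (chol T j j)
      else R 0)"
  by auto
termination
  by (relation "inv_image (less_than <*lex*> less_than) (\<lambda>(T, i, j). (i, j))") auto

definition Tprime :: "nat \<Rightarrow> (nat \<Rightarrow> nat \<Rightarrow> real) \<Rightarrow> (nat \<Rightarrow> nat \<Rightarrow> real) \<Rightarrow> nat \<Rightarrow> nat \<Rightarrow> ext" where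
  "Tprime n A B i j =
     (let bi = i div n; bj = j div n; r = i mod n; c = j mod n in
      if bi = 0 \<and> bj = 0 then (if r = c then R 1 else R 0)
      else if bi = 0 \<and> bj = 1 then R (A c r)
      else if bi = 0 \<and> bj = 2 then R (- B r c)
      else if bi = 1 \<and> bj = 0 then R (A r c)
      else if bi = 1 \<and> bj = 1 then (if r = c then Os else Zs)
      else if bi = 1 \<and> bj = 2 then R 0
      else if bi = 2 \<and> bj = 0 then R (- B c r)
      else if bi = 2 \<and> bj = 1 then R 0
      else (if r = c then Os else Zs))"

end

theory Submission
  imports Defs
begin

declare chol.simps[simp del]

lemma sumR: assumes "finite K" shows "(\<Sum>k\<in>K. R (f k)) = R (\<Sum>k\<in>K. f k)"
  using assms by (induct rule: finite_induct) (auto simp: zero_ext_def plus_ext_def)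

lemma sum_split: "(\<Sum>k<n+(j::nat). (f k :: 'a::comm_monoid_add)) = (\<Sum>k<n. f k) + (\<Sum>m<j. f (n+m))"
  by (induction j) (auto simp: add.assoc)

lemma T11: "i < n \<Longrightarrow> j < n \<Longrightarrow> Tprime n A B i j = R (if i = j then 1 else 0)"
  by (simp add: Tprime_def Let_def)
lemma T21: "r < n \<Longrightarrow> c < n \<Longrightarrow> Tprime n A B (n+r) c = R (A r c)"
  by (simp add: Tprime_def Let_def)
lemma T22: "r < n \<Longrightarrow> c < n \<Longrightarrow> Tprime n A B (n+r) (n+c) = (if r = c then Os else Zs)"
  by (simp add: Tprime_def Let_def)
lemma T31: "r < n \<Longrightarrow> c < n \<Longrightarrow> Tprime n A B (2*n+r) c = R (- B c r)"
proof -
  assume a: "r < n" "c < n"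
  have "(2*n+r) div n = 2" "(2*n+r) mod n = r" using a by auto
  thus ?thesis using a by (simp add: Tprime_def Let_def)
qed
lemma T32: "r < n \<Longrightarrow> c < n \<Longrightarrow> Tprime n A B (2*n+r) (n+c) = R 0"
proof -
  assume a: "r < n" "c < n"
  have "(2*n+r) div n = 2" "(2*n+r) mod n = r" using a by auto
  thus ?thesis using a by (simp add: Tprime_def Let_def)
qed

lemma L11: "i < n \<Longrightarrow> j < n \<Longrightarrow> chol (Tprime n A B) i j = R (if i = j then 1 else 0)"
proof (induction i arbitrary: j rule: less_induct)
  case (less i)
  note outer = less.IH
  show ?case using less.prems
  proof (induction j rule: less_induct)
    case (less j)
    show ?case
    proof (cases "i = j")
      case True
      have "(\<Sum>k<i. ext_mul (chol (Tprime n A B) i k) (chol (Tprime n A B) i k)) = (\<Sum>k<i. R 0)"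
        using less True by (intro sum.cong) (auto simp del: chol.simps)
      then show ?thesis using True less.prems
        by (subst chol.simps) (simp del: chol.simps add: sumR T11 ext_sub_def)
    next
      case False
      show ?thesis
      proof (cases "j < i")
        case True
        have "(\<Sum>k<j. ext_mul (chol (Tprime n A B) i k) (chol (Tprime n A B) j k)) = (\<Sum>k<j. R 0)"
          using less True outer by (intro sum.cong) (auto simp del: chol.simps)
        moreover have "chol (Tprime n A B) j j = R 1" using outer[of j j] \<open>j < i\<close> less.prems
          by (simp del: chol.simps)
        ultimately show ?thesis using True False less.prems
          by (subst chol.simps) (simp del: chol.simps add: sumR T11 ext_sub_def)
      next
        case F2: False
        then show ?thesis using False by (subst chol.simps) (simp del: chol.simps)
      qed
    qed
  qed
qed


lemma L21: "r < n \<Longrightarrow> c < n \<Longrightarrow> chol (Tprime n A B) (n+r) c = R (A r c)"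
proof (induction c rule: less_induct)
  case (less c)
  have "(\<Sum>k<c. ext_mul (chol (Tprime n A B) (n+r) k) (chol (Tprime n A B) c k)) = (\<Sum>k<c. R 0)"
    using less by (intro sum.cong) (auto simp: L11)
  moreover have "chol (Tprime n A B) c c = R 1" using less.prems by (simp add: L11)
  ultimately show ?case using less.prems
    by (subst chol.simps) (simp add: sumR T21 ext_sub_def)
qed

lemma L31: "r < n \<Longrightarrow> c < n \<Longrightarrow> chol (Tprime n A B) (2*n+r) c = R (- B c r)"
proof (induction c rule: less_induct)
  case (less c)
  have "(\<Sum>k<c. ext_mul (chol (Tprime n A B) (2*n+r) k) (chol (Tprime n A B) c k)) = (\<Sum>k<c. R 0)"
    using less by (intro sum.cong) (auto simp: L11)
  moreover have "chol (Tprime n A B) c c = R 1" using less.prems by (simp add: L11)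
  ultimately show ?case using less.prems
    by (subst chol.simps) (simp add: sumR T31 ext_sub_def)
qed

lemma L22: "r < n \<Longrightarrow> c < n \<Longrightarrow> chol (Tprime n A B) (n+r) (n+c) = (if r = c then Os else if c < r then Zs else R 0)"
proof (induction c arbitrary: r rule: less_induct)
  case (less c)
  have diag: "chol (Tprime n A B) (n+c) (n+c) = Os"
  proof -
    have "(\<Sum>k<n+c. ext_mul (chol (Tprime n A B) (n+c) k) (chol (Tprime n A B) (n+c) k))
       = (\<Sum>k<n. R (A c k * A c k)) + (\<Sum>m<c. R 0)"
      unfolding sum_split using less by (intro arg_cong2[where f="(+)"] sum.cong) (auto simp: L21)
    then show ?thesis using less.prems
      by (subst chol.simps) (simp add: sumR T22 ext_sub_def plus_ext_def)
  qed
  show ?case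
  proof (cases "r = c")
    case True then show ?thesis using diag by simp
  next
    case False
    show ?thesis
    proof (cases "c < r")
      case True
      have "(\<Sum>k<n+c. ext_mul (chol (Tprime n A B) (n+r) k) (chol (Tprime n A B) (n+c) k))
         = (\<Sum>k<n. R (A r k * A c k)) + (\<Sum>m<c. R 0)"
        unfolding sum_split using less True by (intro arg_cong2[where f="(+)"] sum.cong) (auto simp: L21)
      then show ?thesis using less.prems True diag
        by (subst chol.simps) (simp add: sumR T22 ext_sub_def plus_ext_def)
    next
      case F2: False
      then show ?thesis using False by (subst chol.simps) simp
    qed
  qed
qed

lemma L32: "i < n \<Longrightarrow> j < n \<Longrightarrow> chol (Tprime n A B) (2*n+i) (n+j) = R (\<Sum>k<n. A j k * B k i)"
proof (induction j rule: less_induct)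
  case (less j)
  have "(\<Sum>k<n+j. ext_mul (chol (Tprime n A B) (2*n+i) k) (chol (Tprime n A B) (n+j) k))
     = (\<Sum>k<n. R (- B k i * A j k)) + (\<Sum>m<j. R 0)"
    unfolding sum_split using less by (intro arg_cong2[where f="(+)"] sum.cong) (auto simp: L21 L31 L22)
  moreover have "chol (Tprime n A B) (n+j) (n+j) = Os" using less.prems by (simp add: L22)
  moreover have "- (\<Sum>k<n. - B k i * A j k) = (\<Sum>k<n. A j k * B k i)"
    by (simp add: sum_negf[symmetric] mult.commute)
  ultimately show ?case using less.prems
    by (subst chol.simps) (simp add: sumR T32 ext_sub_def plus_ext_def)
qed

theorem lemma2p3:
  fixes n :: nat and A B :: "nat \<Rightarrow> nat \<Rightarrow> real"
  shows "\<forall>i<n. \<forall>j<n. chol (Tprime n A B) (2 * n + i) (n + j) = R (\<Sum>k<n. A j k * B k i)"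
  using L32 by blast

end
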